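(* Let $E$ be the group of subsets of $\{1,2,3,4,5\}$ of even cardinality with symmetric difference as group operation (so $E\cong\boldsymbol{\mu}_2^4$), and for an even subset $A$ write $\iota_A$ for the corresponding element of $E$ (e.g. $\iota_{12}=\iota_{\{1,2\}}$). Let $W=E\rtimes\mathfrak{S}_5$, where $\mathfrak{S}_5$ acts on $E$ by permuting elements of subsets, so that $\sigma\iota_A\sigma^{-1}=\iota_{\sigma(A)}$ in $W$, and let $\rho\colon W\to\mathfrak{S}_5$ be the natural projection. Let $H\subset\operatorname{Ker}(\rho)=E$ be a subgroup of order at least $8$, and assume that the element $(1234)\in\mathfrak{S}_5\subset W$ normalizes $H$. Then $\iota_{12}\in H$.
   Context: $W$ is isomorphic to the Weyl group $W(\mathrm{D}_5)$; $\mathfrak{S}_5$ is the symmetric group on $\{1,\dots,5\}$ and $(1234)$ the $4$-cycle. *)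

theory Defs
  imports "HOL-Algebra.Group" "HOL-Combinatorics.Permutations"
begin

definition symdiff :: "nat set \<Rightarrow> nat set \<Rightarrow> nat set" where
  "symdiff A B = (A - B) \<union> (B - A)"

definition evensets :: "nat set set" where
  "evensets = {A. A \<subseteq> {1..5} \<and> even (card A)}"

text \<open>W = E \<rtimes> S_5, elements (A, sigma), with
  (A,p)(B,q) = (A symdiff p(B), p o q). Then sigma iota_A sigma^-1 = iota_{sigma(A)}.\<close>
definition W :: "(nat set \<times> (nat \<Rightarrow> nat)) monoid" where
  "W = \<lparr> carrier = {(A, p). A \<in> evensets \<and> p permutes {1..5}},
         monoid.mult = (\<lambda>(A, p) (B, q). (symdiff A (p ` B), p \<circ> q)),
         monoid.one = ({}, id) \<rparr>"

definition rho :: "nat set \<times> (nat \<Rightarrow> nat) \<Rightarrow> (nat \<Rightarrow> nat)" where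
  "rho x = snd x"

definition iota :: "nat set \<Rightarrow> nat set \<times> (nat \<Rightarrow> nat)" where
  "iota A = (A, id)"

definition cyc1234 :: "nat \<Rightarrow> nat" where
  "cyc1234 i = (if i = 1 then 2 else if i = 2 then 3 else if i = 3 then 4
                else if i = 4 then 1 else i)"

end

theory Submission
  imports Defs
begin

lemma cyc_permutes: "cyc1234 permutes {1..5}"
proof -
  have "bij cyc1234"
  proof (rule o_bij[where g="cyc1234 \<circ> cyc1234 \<circ> cyc1234"])
    show "cyc1234 \<circ> cyc1234 \<circ> cyc1234 \<circ> cyc1234 = id"
      by (auto simp: cyc1234_def fun_eq_iff)
    show "cyc1234 \<circ> (cyc1234 \<circ> cyc1234 \<circ> cyc1234) = id"
      by (auto simp: cyc1234_def fun_eq_iff)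
  qed
  moreover have "\<forall>x. x \<notin> {1..5} \<longrightarrow> cyc1234 x = x" by (auto simp: cyc1234_def)
  ultimately show ?thesis by (simp add: permutes_def bij_iff)
qed

lemma evensets_cases:
  assumes "A \<in> evensets"
  shows "A \<in> {{}, {1,2}, {2,3}, {3,4}, {1,4}, {1,3}, {2,4}, {1,2,3,4},
     {1,5}, {2,5}, {3,5}, {4,5}, {1,2,3,5}, {1,2,4,5}, {1,3,4,5}, {2,3,4,5}}"
proof -
  have "{1..5::nat} = {1,2,3,4,5}" by auto
  hence "A \<in> Pow {1,2,3,4,5}" "even (card A)" using assms by (auto simp: evensets_def)
  thus ?thesis by (simp add: Pow_insert) (elim disjE exE conjE; simp)
qed

lemma inv_cyc: "inv\<^bsub>W\<^esub> ({}, cyc1234) = ({}, (inv_into UNIV cyc1234))"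
proof -
  have p: "cyc1234 permutes {1..5}" by (rule cyc_permutes)
  have pi: "(inv_into UNIV cyc1234) permutes {1..5}" using p by (rule permutes_inv)
  have e: "{} \<in> evensets" by (simp add: evensets_def)
  show ?thesis
    unfolding m_inv_def
  proof (rule the_equality)
    show "({}, (inv_into UNIV cyc1234)) \<in> carrier W \<and>
      ({}, cyc1234) \<otimes>\<^bsub>W\<^esub> ({}, (inv_into UNIV cyc1234)) = \<one>\<^bsub>W\<^esub> \<and>
      ({}, (inv_into UNIV cyc1234)) \<otimes>\<^bsub>W\<^esub> ({}, cyc1234) = \<one>\<^bsub>W\<^esub>"
      using p pi e by (simp add: W_def symdiff_def permutes_inv_o)
  next
    fix y assume y: "y \<in> carrier W \<and> ({}, cyc1234) \<otimes>\<^bsub>W\<^esub> y = \<one>\<^bsub>W\<^esub> \<and>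
      y \<otimes>\<^bsub>W\<^esub> ({}, cyc1234) = \<one>\<^bsub>W\<^esub>"
    obtain D q where yd: "y = (D, q)" by fastforce
    from y have "cyc1234 ` D = {}" "cyc1234 \<circ> q = id" "q \<circ> cyc1234 = id"
      by (auto simp: W_def yd symdiff_def)
    hence "D = {}" "q = (inv_into UNIV cyc1234)" using inv_unique_comp by auto
    thus "y = ({}, (inv_into UNIV cyc1234))" using yd by simp
  qed
qed

theorem lemma3p2:
  fixes H :: "(nat set \<times> (nat \<Rightarrow> nat)) set"
  assumes "subgroup H W"
    and "H \<subseteq> {x \<in> carrier W. rho x = id}"
    and "card H \<ge> 8"
    and "(\<lambda>h. ({}, cyc1234) \<otimes>\<^bsub>W\<^esub> h \<otimes>\<^bsub>W\<^esub> inv\<^bsub>W\<^esub> ({}, cyc1234)) ` H = H"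
  shows "iota {1, 2} \<in> H"
proof (rule ccontr)
  assume n12: "iota {1, 2} \<notin> H"
  define c where "c = cyc1234"
  have p: "c permutes {1..5}" unfolding c_def by (rule cyc_permutes)
  define S where "S = fst ` H"
  have Hform: "\<And>h. h \<in> H \<Longrightarrow> h = (fst h, id) \<and> fst h \<in> evensets"
    using assms(2) by (auto simp: rho_def W_def)
  have memS: "\<And>A. A \<in> S \<longleftrightarrow> (A, id) \<in> H"
    unfolding S_def using Hform by force
  have "inj_on fst H" using Hform by (metis inj_onI)
  hence cS: "card S \<ge> 8" using assms(3) by (simp add: S_def card_image)
  have Sev: "\<And>A. A \<in> S \<Longrightarrow> A \<in> evensets" using Hform S_def by auto
  have conj: "\<And>A. A \<in> S \<Longrightarrow> c ` A \<in> S"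
  proof -
    fix A assume "A \<in> S"
    hence "(A, id) \<in> H" using memS by simp
    hence "({}, cyc1234) \<otimes>\<^bsub>W\<^esub> (A, id) \<otimes>\<^bsub>W\<^esub> inv\<^bsub>W\<^esub> ({}, cyc1234) \<in> H"
      using assms(4) by blast
    moreover have "({}, cyc1234) \<otimes>\<^bsub>W\<^esub> (A, id) \<otimes>\<^bsub>W\<^esub> inv\<^bsub>W\<^esub> ({}, cyc1234) = (c ` A, c \<circ> inv_into UNIV c)"
    proof -
      have "({}, cyc1234) \<otimes>\<^bsub>W\<^esub> (A, id) = (cyc1234 ` A, cyc1234)"
        by (simp add: W_def symdiff_def)
      moreover have "(cyc1234 ` A, cyc1234) \<otimes>\<^bsub>W\<^esub> ({}, inv_into UNIV cyc1234) = (cyc1234 ` A, cyc1234 \<circ> inv_into UNIV cyc1234)"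
        by (simp add: W_def symdiff_def)
      ultimately show ?thesis by (simp add: inv_cyc c_def)
    qed
    moreover have "c \<circ> inv_into UNIV c = id" using p by (simp add: permutes_inv_o)
    ultimately show "c ` A \<in> S" using memS by simp
  qed
  have sd: "\<And>A B. A \<in> S \<Longrightarrow> B \<in> S \<Longrightarrow> symdiff A B \<in> S"
  proof -
    fix A B assume "A \<in> S" "B \<in> S"
    hence "(A, id) \<otimes>\<^bsub>W\<^esub> (B, id) \<in> H" using memS by (auto intro: subgroup.m_closed[OF assms(1)])
    thus "symdiff A B \<in> S" using memS by (simp add: W_def)
  qed
  have key: "\<And>A. A \<in> S \<Longrightarrow> symdiff A (c ` A) \<in> S" using sd conj by blast
  have a12: "{1,2} \<notin> S" using n12 memS by (simp add: iota_def)
  have a14: "{1,4} \<notin> S"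
  proof
    assume "{1,4} \<in> S" hence "c ` {1,4} \<in> S" by (rule conj)
    moreover have "c ` {1,4} = {1,2}" by (auto simp: c_def cyc1234_def)
    ultimately show False using a12 by simp
  qed
  have a34: "{3,4} \<notin> S"
  proof
    assume "{3,4} \<in> S" hence "c ` {3,4} \<in> S" by (rule conj)
    moreover have "c ` {3,4} = {1,4}" by (auto simp: c_def cyc1234_def)
    ultimately show False using a14 by simp
  qed
  have a23: "{2,3} \<notin> S"
  proof
    assume "{2,3} \<in> S" hence "c ` {2,3} \<in> S" by (rule conj)
    moreover have "c ` {2,3} = {3,4}" by (auto simp: c_def cyc1234_def)
    ultimately show False using a34 by simp
  qed
  have gen: "\<And>A B. A \<in> S \<Longrightarrow> symdiff A (c ` A) = B \<Longrightarrow> B \<in> S"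
    using key by blast
  have b0: "{1,5} \<notin> S"
  proof
    assume h: "{1,5} \<in> S"
    have "symdiff {1,5} (c ` {1,5}) = {1,2}" by (auto simp: symdiff_def c_def cyc1234_def)
    from gen[OF h this] a12 show False by simp
  qed
  have b1: "{2,5} \<notin> S"
  proof
    assume h: "{2,5} \<in> S"
    have "symdiff {2,5} (c ` {2,5}) = {2,3}" by (auto simp: symdiff_def c_def cyc1234_def)
    from gen[OF h this] a23 show False by simp
  qed
  have b2: "{3,5} \<notin> S"
  proof
    assume h: "{3,5} \<in> S"
    have "symdiff {3,5} (c ` {3,5}) = {3,4}" by (auto simp: symdiff_def c_def cyc1234_def)
    from gen[OF h this] a34 show False by simp
  qed
  have b3: "{4,5} \<notin> S"
  proof
    assume h: "{4,5} \<in> S"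
    have "symdiff {4,5} (c ` {4,5}) = {1,4}" by (auto simp: symdiff_def c_def cyc1234_def)
    from gen[OF h this] a14 show False by simp
  qed
  have b4: "{1,2,3,5} \<notin> S"
  proof
    assume h: "{1,2,3,5} \<in> S"
    have "symdiff {1,2,3,5} (c ` {1,2,3,5}) = {1,4}" by (auto simp: symdiff_def c_def cyc1234_def)
    from gen[OF h this] a14 show False by simp
  qed
  have b5: "{1,2,4,5} \<notin> S"
  proof
    assume h: "{1,2,4,5} \<in> S"
    have "symdiff {1,2,4,5} (c ` {1,2,4,5}) = {3,4}" by (auto simp: symdiff_def c_def cyc1234_def)
    from gen[OF h this] a34 show False by simp
  qed
  have b6: "{1,3,4,5} \<notin> S"
  proof
    assume h: "{1,3,4,5} \<in> S"
    have "symdiff {1,3,4,5} (c ` {1,3,4,5}) = {2,3}" by (auto simp: symdiff_def c_def cyc1234_def)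
    from gen[OF h this] a23 show False by simp
  qed
  have b7: "{2,3,4,5} \<notin> S"
  proof
    assume h: "{2,3,4,5} \<in> S"
    have "symdiff {2,3,4,5} (c ` {2,3,4,5}) = {1,2}" by (auto simp: symdiff_def c_def cyc1234_def)
    from gen[OF h this] a12 show False by simp
  qed
  have bad: "\<And>A. A \<in> S \<Longrightarrow> A = {} \<or> A = {1,3} \<or> A = {2,4} \<or> A = {1,2,3,4}"
  proof -
    fix A assume AS: "A \<in> S"
    have "A \<in> {{}, {1,2}, {2,3}, {3,4}, {1,4}, {1,3}, {2,4}, {1,2,3,4},
     {1,5}, {2,5}, {3,5}, {4,5}, {1,2,3,5}, {1,2,4,5}, {1,3,4,5}, {2,3,4,5}}"
      using evensets_cases[OF Sev[OF AS]] .
    hence d: "A = {} \<or> A = {1,2} \<or> A = {2,3} \<or> A = {3,4} \<or> A = {1,4} \<or> A = {1,3} \<or> A = {2,4} \<or> A = {1,2,3,4} \<or>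
     A = {1,5} \<or> A = {2,5} \<or> A = {3,5} \<or> A = {4,5} \<or> A = {1,2,3,5} \<or> A = {1,2,4,5} \<or> A = {1,3,4,5} \<or> A = {2,3,4,5}"
      by (simp only: insert_iff empty_iff simp_thms)
    show "A = {} \<or> A = {1,3} \<or> A = {2,4} \<or> A = {1,2,3,4}"
      using d AS a12 a23 a34 a14 b0 b1 b2 b3 b4 b5 b6 b7 by (elim disjE) simp_all
  qed
  hence "S \<subseteq> {{}, {1,3}, {2,4}, {1,2,3,4}}" by blast
  hence "card S \<le> card {{}, {1,3}, {2,4}, {1,2,3,4::nat}}" by (rule card_mono[rotated]) simp
  also have "\<dots> \<le> 4"
    using card_length[of "[{}, {1,3}, {2,4}, {1,2,3,4::nat}]"] by simp
  finally show False using cS by simp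
qed

end
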